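(* The center of a generalized weakly Rickart $*$-ring is a generalized weakly Rickart $*$-ring.
   Context: A $*$-ring is an associative ring $R$ with an involution $x\mapsto x^*$ (additive, $(xy)^*=y^*x^*$, $x^{**}=x$). A projection is an element $e$ with $e=e^*=e^2$. In a $*$-ring $S$, a projection $e\in S$ is a generalized right projection of $x\in S$ if there exists $n\in\mathbb N$ with $x^ne=x^n$ and, for all $y\in S$, $x^ny=0$ implies $ey=0$. $S$ is a generalized weakly Rickart $*$-ring if every element of $S$ has a generalized right projection in $S$. The center $C(R)=\{c\in R: cr=rc\ \forall r\in R\}$ is a $*$-subring. *)

theory Defs
  imports Main
begin

text \<open>Associative (not necessarily unital) rings are modelled by the type class ring.
  An involution is given as an explicit function.\<close>

definition star_ring :: "('a::ring \<Rightarrow> 'a) \<Rightarrow> bool" where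
  "star_ring st \<longleftrightarrow>
     (\<forall>x y. st (x + y) = st x + st y) \<and>
     (\<forall>x y. st (x * y) = st y * st x) \<and>
     (\<forall>x. st (st x) = x)"

text \<open>Positive powers x^n for n >= 1 in a possibly non-unital ring (value at 0 is junk).\<close>
fun rpow :: "'a::ring \<Rightarrow> nat \<Rightarrow> 'a" where
  "rpow x 0 = x"
| "rpow x (Suc 0) = x"
| "rpow x (Suc (Suc n)) = x * rpow x (Suc n)"

definition star_subring :: "('a::ring \<Rightarrow> 'a) \<Rightarrow> 'a set \<Rightarrow> bool" where
  "star_subring st S \<longleftrightarrow> 0 \<in> S \<and> (\<forall>x\<in>S. \<forall>y\<in>S. x + y \<in> S \<and> x * y \<in> S) \<and>
     (\<forall>x\<in>S. - x \<in> S \<and> st x \<in> S)"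

definition is_projection :: "('a::ring \<Rightarrow> 'a) \<Rightarrow> 'a \<Rightarrow> bool" where
  "is_projection st e \<longleftrightarrow> e = st e \<and> e = e * e"

definition gen_right_proj :: "('a::ring \<Rightarrow> 'a) \<Rightarrow> 'a set \<Rightarrow> 'a \<Rightarrow> 'a \<Rightarrow> bool" where
  "gen_right_proj st S x e \<longleftrightarrow> e \<in> S \<and> is_projection st e \<and>
     (\<exists>n::nat. n \<ge> 1 \<and> rpow x n * e = rpow x n \<and>
        (\<forall>y\<in>S. rpow x n * y = 0 \<longrightarrow> e * y = 0))"

definition gen_weakly_rickart :: "('a::ring \<Rightarrow> 'a) \<Rightarrow> 'a set \<Rightarrow> bool" where
  "gen_weakly_rickart st S \<longleftrightarrow> star_subring st S \<and>
     (\<forall>x\<in>S. \<exists>e. gen_right_proj st S x e)"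

definition center :: "'a::ring set" where
  "center = {c. \<forall>r. c * r = r * c}"

end

theory Submission
  imports Defs
begin

lemma rpow_central:
  fixes x :: "'a::ring"
  assumes "\<forall>r. x * r = r * x"
  shows "rpow x n * r = r * rpow x n"
proof (induction n rule: nat_less_induct)
  case (1 n)
  show ?case
  proof (cases n)
    case 0 then show ?thesis using assms by simp
  next
    case (Suc m)
    show ?thesis
    proof (cases m)
      case 0 then show ?thesis using assms Suc by simp
    next
      case (Suc k)
      have ih: "rpow x (Suc k) * r = r * rpow x (Suc k)" using 1 Suc \<open>n = Suc m\<close> by simp
      have "rpow x n * r = x * (rpow x (Suc k) * r)" using Suc \<open>n = Suc m\<close> by (simp add: mult.assoc)
      also have "\<dots> = (x * r) * rpow x (Suc k)" by (simp only: ih mult.assoc)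
      also have "\<dots> = r * (x * rpow x (Suc k))" using assms by (metis mult.assoc)
      also have "\<dots> = r * rpow x n" using Suc \<open>n = Suc m\<close> by simp
      finally show ?thesis .
    qed
  qed
qed

theorem mainTheorem9:
  fixes st :: "'a::ring \<Rightarrow> 'a"
  assumes "star_ring st"
    and "gen_weakly_rickart st (UNIV :: 'a set)"
  shows "gen_weakly_rickart st (center :: 'a set)"
proof -
  have add: "\<And>x y. st (x + y) = st x + st y" and mul: "\<And>x y. st (x * y) = st y * st x"
    and inv: "\<And>x. st (st x) = x" using assms(1) unfolding star_ring_def by auto
  have sub: "star_subring st (center :: 'a set)"
    unfolding star_subring_def center_def
  proof (intro conjI ballI)
    fix x y :: 'a
    assume x: "x \<in> {c. \<forall>r. c * r = r * c}" and y: "y \<in> {c. \<forall>r. c * r = r * c}"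
    have xc: "\<And>r. x * r = r * x" and yc: "\<And>r. y * r = r * y" using x y by auto
    show "x + y \<in> {c. \<forall>r. c * r = r * c}"
    proof (simp only: mem_Collect_eq, intro allI)
      fix r
      have "(x + y) * r = x * r + y * r" by (rule distrib_right)
      also have "\<dots> = r * x + r * y" by (simp only: xc yc)
      also have "\<dots> = r * (x + y)" by (rule distrib_left[symmetric])
      finally show "(x + y) * r = r * (x + y)" .
    qed
    show "x * y \<in> {c. \<forall>r. c * r = r * c}"
    proof (simp only: mem_Collect_eq, intro allI)
      fix r
      have "x * y * r = x * (y * r)" by (rule mult.assoc)
      also have "\<dots> = x * (r * y)" by (simp only: yc)
      also have "\<dots> = (x * r) * y" by (rule mult.assoc[symmetric])
      also have "\<dots> = (r * x) * y" by (simp only: xc)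
      also have "\<dots> = r * (x * y)" by (rule mult.assoc)
      finally show "x * y * r = r * (x * y)" .
    qed
  next
    fix x :: 'a
    assume x: "x \<in> {c. \<forall>r. c * r = r * c}"
    show "- x \<in> {c. \<forall>r. c * r = r * c}" using x by (simp only: mem_Collect_eq mult_minus_left mult_minus_right) simp
    show "st x \<in> {c. \<forall>r. c * r = r * c}"
    proof (simp, intro allI)
      fix r
      have "st x * r = st (st r * x)" by (simp add: mul inv)
      also have "\<dots> = st (x * st r)" using x by (simp only: mem_Collect_eq)
      also have "\<dots> = r * st x" by (simp add: mul inv)
      finally show "st x * r = r * st x" .
    qed
  qed simp
  show ?thesis unfolding gen_weakly_rickart_def
  proof (intro conjI ballI sub)
    fix x :: 'a assume xc: "x \<in> center"
    hence xr: "\<forall>r. x * r = r * x" unfolding center_def by simp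
    obtain e n where proj: "is_projection st e" and n1: "n \<ge> 1" and xe: "rpow x n * e = rpow x n"
      and ann: "\<And>y. rpow x n * y = 0 \<Longrightarrow> e * y = 0"
      using assms(2) unfolding gen_weakly_rickart_def gen_right_proj_def by blast
    have ee: "e * e = e" and se: "st e = e" using proj unfolding is_projection_def by auto
    have c: "rpow x n * r = r * rpow x n" for r using rpow_central[OF xr] .
    have ere: "e * r = e * r * e" for r
    proof -
      have "rpow x n * (r - r * e) = 0"
        by (simp add: right_diff_distrib c flip: mult.assoc) (simp add: mult.assoc xe)
      hence "e * (r - r * e) = 0" by (rule ann)
      hence "e * r - e * r * e = 0" by (simp only: right_diff_distrib mult.assoc)
      thus ?thesis by (simp only: right_minus_eq)
    qed
    have rer: "r * e = e * r * e" for r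
    proof -
      have "st (e * st r) = st (e * st r * e)" using ere[of "st r"] by (rule arg_cong)
      thus ?thesis by (simp add: mul inv se mult.assoc)
    qed
    have "e \<in> center" unfolding center_def
    proof (simp only: mem_Collect_eq, intro allI)
      fix r show "e * r = r * e" using ere[of r] rer[of r] by (rule trans[OF _ sym])
    qed
    thus "\<exists>e. gen_right_proj st center x e"
      unfolding gen_right_proj_def using proj n1 xe ann by blast
  qed
qed

end
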